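(* Let $\sigma_1=\sigma_x,\sigma_2=\sigma_y,\sigma_3=\sigma_z$ be the Pauli matrices. For $\underline{\lambda}=(\lambda_1,\lambda_2,\lambda_3)\in\mathbb{R}^3$ let $U_{\underline{\lambda}}=\exp\{-i\sum_{j=1}^3\lambda_j\,\sigma_j\otimes\sigma_j\}$ act on $\mathbb{C}^2\otimes\mathbb{C}^2$. Let $|\psi_0\rangle$ be any normalized two-qubit pure state and $|\psi_{\underline{\lambda}}\rangle=U_{\underline{\lambda}}|\psi_0\rangle$. Then the Uhlmann curvature (incompatibility) matrix $D$ of the model $\underline{\lambda}\mapsto|\psi_{\underline{\lambda}}\rangle$ vanishes identically: $D_{jk}=0$ for all $j,k\in\{1,2,3\}$, every $\underline{\lambda}$ and every probe $|\psi_0\rangle$.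
   Context: For a pure-state model $\underline{\lambda}\mapsto|\psi_{\underline{\lambda}}\rangle$, with $\partial_j=\partial/\partial\lambda_j$, the Uhlmann curvature matrix is $D_{jk}=4\,\mathrm{Im}\big[\langle\partial_j\psi|\partial_k\psi\rangle-\langle\partial_j\psi|\psi\rangle\langle\psi|\partial_k\psi\rangle\big]$ (equivalently $D_{jk}=-\tfrac{i}{2}\mathrm{Tr}[\rho[L_j,L_k]]$ with $L_j$ the symmetric logarithmic derivatives of $\rho=|\psi_{\underline{\lambda}}\rangle\langle\psi_{\underline{\lambda}}|$). *)

theory Defs
  imports "HOL-Analysis.Analysis"
begin

text \<open>Single-qubit basis index type 2,
  with element 1 = first basis vector, element 2 (= 0) = second basis vector.\<close>

type_synonym qubit_op = "complex^2^2"
type_synonym two_qubit_vec = "complex^(2 \<times> 2)"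
type_synonym two_qubit_op = "complex^(2 \<times> 2)^(2 \<times> 2)"

definition mk2 :: "complex \<Rightarrow> complex \<Rightarrow> complex \<Rightarrow> complex \<Rightarrow> qubit_op" where
  "mk2 a b c d = (\<chi> i j. if i = 1 then (if j = 1 then a else b)
                              else (if j = 1 then c else d))"

definition pauli_x :: qubit_op where "pauli_x = mk2 0 1 1 0"
definition pauli_y :: qubit_op where "pauli_y = mk2 0 (- \<i>) \<i> 0"
definition pauli_z :: qubit_op where "pauli_z = mk2 1 0 0 (-1)"

text \<open>sigma 1 = sigma_x, sigma 2 = sigma_y, sigma 3 = sigma_z (index type 3, where 3 = 0).\<close>
definition pauli :: "3 \<Rightarrow> qubit_op" where
  "pauli j = (if j = 1 then pauli_x else if j = 2 then pauli_y else pauli_z)"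

definition kron :: "qubit_op \<Rightarrow> qubit_op \<Rightarrow> two_qubit_op" where
  "kron A B = (\<chi> p q. A$(fst p)$(fst q) * B$(snd p)$(snd q))"

primrec mpow :: "complex^'n^'n \<Rightarrow> nat \<Rightarrow> complex^'n^'n" where
  "mpow A 0 = mat 1"
| "mpow A (Suc n) = A ** mpow A n"

definition mexp :: "complex^'n^'n \<Rightarrow> complex^'n^'n" where
  "mexp A = (\<chi> i j. (\<Sum>n. (mpow A n)$i$j / of_nat (fact n)))"

definition U_lam :: "real^3 \<Rightarrow> two_qubit_op" where
  "U_lam lam = mexp (\<chi> a b. - \<i> * (\<Sum>j\<in>UNIV. of_real (lam$j) * (kron (pauli j) (pauli j))$a$b))"

definition braket :: "complex^'n \<Rightarrow> complex^'n \<Rightarrow> complex" where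
  "braket u v = (\<Sum>i\<in>UNIV. cnj (u$i) * v$i)"

definition pdiff :: "(real^'m \<Rightarrow> complex^'n) \<Rightarrow> real^'m \<Rightarrow> 'm \<Rightarrow> complex^'n" where
  "pdiff psi lam j = vector_derivative (\<lambda>t. psi (lam + t *\<^sub>R axis j 1)) (at 0)"

definition uhlmann_D :: "(real^'m \<Rightarrow> complex^'n) \<Rightarrow> real^'m \<Rightarrow> 'm \<Rightarrow> 'm \<Rightarrow> real" where
  "uhlmann_D psi lam j k = 4 * Im (braket (pdiff psi lam j) (pdiff psi lam k)
       - braket (pdiff psi lam j) (psi lam) * braket (psi lam) (pdiff psi lam k))"

end

theory Submission
  imports Defs
begin


lemma n2: "(1::2) \<noteq> 2" "(2::2) \<noteq> 1" by auto
lemma n3: "(1::3) \<noteq> 2" "(2::3) \<noteq> 1" "(1::3) \<noteq> 3" "(3::3) \<noteq> 1" "(2::3) \<noteq> 3" "(3::3) \<noteq> 2" by auto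

definition bv :: "nat \<Rightarrow> 2\<times>2 \<Rightarrow> complex" where
  "bv c p = (if c = 0 then (if p = (1,1) \<or> p = (2,2) then 1 else 0)
     else if c = 1 then (if p = (1,1) then 1 else if p = (2,2) then -1 else 0)
     else if c = 2 then (if p = (1,2) \<or> p = (2,1) then 1 else 0)
     else (if p = (1,2) then 1 else if p = (2,1) then -1 else 0))"

definition sg :: "nat \<Rightarrow> 3 \<Rightarrow> real" where
  "sg c j = (if c = 0 then (if j = 2 then -1 else 1)
     else if c = 1 then (if j = 1 then -1 else 1)
     else if c = 2 then (if j = 3 then -1 else 1)
     else -1)"

definition dv :: "nat \<Rightarrow> real^3 \<Rightarrow> real" where
  "dv c lam = (\<Sum>j\<in>UNIV. sg c j * lam$j)"

definition PP :: "nat \<Rightarrow> 2\<times>2 \<Rightarrow> 2\<times>2 \<Rightarrow> complex" where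
  "PP c a b = bv c a * bv c b / 2"

definition Amat :: "real^3 \<Rightarrow> two_qubit_op" where
  "Amat lam = (\<chi> a b. - \<i> * (\<Sum>j\<in>UNIV. of_real (lam$j) * (kron (pauli j) (pauli j))$a$b))"

lemma pair_cases: "(p::2\<times>2) = (1,1) \<or> p = (1,2) \<or> p = (2,1) \<or> p = (2,2)"
  by (cases p) (metis exhaust_2)

lemma UNIV22: "(UNIV::(2\<times>2) set) = {(1,1),(1,2),(2,1),(2,2)}"
  using pair_cases by auto

lemma sum_22: "sum f (UNIV::(2\<times>2) set) = f (1,1) + f (1,2) + f (2,1) + f (2,2)"
  by (simp add: UNIV22 n2 ac_simps)

lemma sum4: "(\<Sum>c<(4::nat). f c) = f 0 + f 1 + f 2 + (f 3::'a::comm_monoid_add)"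
  by (simp add: eval_nat_numeral ac_simps)

lemma Amat_dec: "Amat lam $ a $ b = (\<Sum>c<4. (- \<i> * of_real (dv c lam)) * PP c a b)"
  using pair_cases[of a] pair_cases[of b]
  apply (elim disjE)
  apply (simp_all add: Amat_def sum4 PP_def bv_def dv_def sg_def sum_3 n2 n3 kron_def pauli_def pauli_x_def pauli_y_def pauli_z_def mk2_def)
  apply (simp_all add: field_simps)
  done

lemma lt4: "(c::nat) < 4 \<Longrightarrow> c = 0 \<or> c = 1 \<or> c = 2 \<or> c = 3" by auto

lemma PP_orth: assumes "c < 4" "c' < 4"
  shows "(\<Sum>k\<in>UNIV. PP c a k * PP c' k b) = (if c = c' then PP c a b else 0)"
  using lt4[OF assms(1)] lt4[OF assms(2)] pair_cases[of a] pair_cases[of b]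
  by (elim disjE) (simp_all add: sum_22 PP_def bv_def n2)

lemma PP_sum: "(\<Sum>c<4. PP c a b) = (if a = b then 1 else 0)"
  using pair_cases[of a] pair_cases[of b]
  by (elim disjE) (simp_all add: sum4 PP_def bv_def n2)

definition mu :: "nat \<Rightarrow> real^3 \<Rightarrow> complex" where
  "mu c lam = - \<i> * of_real (dv c lam)"

lemma mpow_dec: "mpow (Amat lam) n $ a $ b = (\<Sum>c<4. mu c lam ^ n * PP c a b)"
proof (induction n arbitrary: a b)
  case 0
  then show ?case by (simp add: PP_sum mat_def)
next
  case (Suc n)
  have "mpow (Amat lam) (Suc n) $ a $ b = (\<Sum>k\<in>UNIV. Amat lam $ a $ k * mpow (Amat lam) n $ k $ b)"
    by (simp add: matrix_matrix_mult_def)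
  also have "\<dots> = (\<Sum>k\<in>UNIV. (\<Sum>c<4. mu c lam * PP c a k) * (\<Sum>c'<4. mu c' lam ^ n * PP c' k b))"
    by (simp add: Amat_dec Suc mu_def)
  also have "\<dots> = (\<Sum>k\<in>UNIV. \<Sum>c<4. \<Sum>c'<4. mu c lam * mu c' lam ^ n * (PP c a k * PP c' k b))"
    by (simp add: sum_product mult_ac)
  also have "\<dots> = (\<Sum>c<4. \<Sum>k\<in>UNIV. \<Sum>c'<4. mu c lam * mu c' lam ^ n * (PP c a k * PP c' k b))"
    by (rule sum.swap)
  also have "\<dots> = (\<Sum>c<4. \<Sum>c'<4. \<Sum>k\<in>UNIV. mu c lam * mu c' lam ^ n * (PP c a k * PP c' k b))"
    by (intro sum.cong refl sum.swap)
  also have "\<dots> = (\<Sum>c<4. \<Sum>c'<4. mu c lam * mu c' lam ^ n * (\<Sum>k\<in>UNIV. PP c a k * PP c' k b))"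
    by (simp add: sum_distrib_left)
  also have "\<dots> = (\<Sum>c<4. \<Sum>c'<4. mu c lam * mu c' lam ^ n * (if c = c' then PP c a b else 0))"
    by (intro sum.cong refl) (simp add: PP_orth)
  also have "\<dots> = (\<Sum>c<4. mu c lam ^ Suc n * PP c a b)"
    by (simp add: if_distrib[of "\<lambda>x. _ * x"] sum.delta mult_ac cong: if_cong)
  finally show ?case .
qed

lemma U_dec: "U_lam lam $ a $ b = (\<Sum>c<4. exp (mu c lam) * PP c a b)"
proof -
  have "(\<lambda>n. mpow (Amat lam) n $ a $ b / of_nat (fact n)) sums (\<Sum>c<4. exp (mu c lam) * PP c a b)"
  proof -
    have "(\<lambda>n. \<Sum>c<4. (mu c lam ^ n /\<^sub>R fact n) * PP c a b) sums (\<Sum>c<4. exp (mu c lam) * PP c a b)"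
      by (intro sums_sum sums_mult2 exp_converges)
    then show ?thesis
      by (simp add: mpow_dec sum_divide_distrib scaleR_conv_of_real field_simps)
  qed
  then show ?thesis
    unfolding U_lam_def Amat_def[symmetric] mexp_def by (simp add: sums_iff)
qed

definition ww :: "two_qubit_vec \<Rightarrow> nat \<Rightarrow> two_qubit_vec" where
  "ww psi0 c = (\<chi> a. \<Sum>b\<in>UNIV. PP c a b * psi0 $ b)"

definition LL :: "two_qubit_vec \<Rightarrow> complex \<Rightarrow> two_qubit_vec" where
  "LL w z = (\<chi> a. z * w $ a)"

lemma LL_bl: "bounded_linear (LL w)"
proof (rule bounded_linear_intro[where K = "\<Sum>a\<in>UNIV. norm (w $ a)"])
  fix x y :: complex and r :: real
  show "LL w (x + y) = LL w x + LL w y" by (simp add: LL_def vec_eq_iff algebra_simps)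
  show "LL w (r *\<^sub>R x) = r *\<^sub>R LL w x" by (simp add: LL_def vec_eq_iff)
  have "norm (LL w x) \<le> (\<Sum>a\<in>UNIV. norm (LL w x $ a))" by (simp add: norm_vec_def L2_set_le_sum)
  also have "\<dots> = norm x * (\<Sum>a\<in>UNIV. norm (w $ a))"
    by (simp add: LL_def norm_mult sum_distrib_left)
  finally show "norm (LL w x) \<le> norm x * (\<Sum>a\<in>UNIV. norm (w $ a))" .
qed

lemma psi_dec: "U_lam l *v psi0 = (\<Sum>c<4. LL (ww psi0 c) (exp (mu c l)))"
proof -
  have "(U_lam l *v psi0) $ a = (\<Sum>c<4. LL (ww psi0 c) (exp (mu c l))) $ a" for a
  proof -
    have "(U_lam l *v psi0) $ a = (\<Sum>b\<in>UNIV. (\<Sum>c<4. exp (mu c l) * PP c a b) * psi0 $ b)"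
      by (simp add: matrix_vector_mult_def U_dec)
    also have "\<dots> = (\<Sum>b\<in>UNIV. \<Sum>c<4. exp (mu c l) * (PP c a b * psi0 $ b))"
      by (simp add: sum_distrib_right sum_distrib_left mult_ac)
    also have "\<dots> = (\<Sum>c<4. \<Sum>b\<in>UNIV. exp (mu c l) * (PP c a b * psi0 $ b))"
      by (rule sum.swap)
    also have "\<dots> = (\<Sum>c<4. LL (ww psi0 c) (exp (mu c l))) $ a"
      by (simp add: sum_component LL_def ww_def sum_distrib_left)
    finally show ?thesis .
  qed
  then show ?thesis by (simp add: vec_eq_iff)
qed

lemma mu_shift: "mu c (lam + t *\<^sub>R axis j 1) = mu c lam + of_real t * (- \<i> * of_real (sg c j))"
proof -
  have "dv c (lam + t *\<^sub>R axis j 1) = dv c lam + t * sg c j"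
    by (simp add: dv_def axis_def algebra_simps sum.distrib sum_distrib_left if_distrib[of "\<lambda>x. _ * x"] cong: if_cong)
  then show ?thesis by (simp add: mu_def algebra_simps)
qed

lemma exp_vd: fixes z m :: complex shows "((\<lambda>t::real. exp (z + of_real t * m)) has_vector_derivative (m * exp z)) (at 0)"
proof -
  have "((\<lambda>u. exp (z + u * m)) has_field_derivative (m * exp z)) (at (of_real 0))"
    by (auto intro!: derivative_eq_intros)
  then show ?thesis by (rule has_vector_derivative_real_field)
qed

lemma pdiff_dec: "pdiff (\<lambda>l. U_lam l *v psi0) lam j =
   (\<Sum>c<4. LL (ww psi0 c) ((- \<i> * of_real (sg c j)) * exp (mu c lam)))"
proof -
  have "((\<lambda>t. \<Sum>c<4. LL (ww psi0 c) (exp (mu c lam + of_real t * (- \<i> * of_real (sg c j)))))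
     has_vector_derivative (\<Sum>c<4. LL (ww psi0 c) ((- \<i> * of_real (sg c j)) * exp (mu c lam)))) (at 0)"
    by (intro has_vector_derivative_sum bounded_linear.has_vector_derivative[OF LL_bl] exp_vd)
  then show ?thesis
    unfolding pdiff_def psi_dec mu_shift by (rule vector_derivative_at)
qed

lemma braket_LL: "braket (LL v x) (LL w y) = cnj x * y * braket v w"
  by (simp add: braket_def LL_def sum_distrib_left mult_ac)

lemma braket_sum_l: "braket (\<Sum>c\<in>S. f c) v = (\<Sum>c\<in>S. braket (f c) v)"
  by (simp add: braket_def sum_component sum_distrib_right sum.swap[of _ UNIV])

lemma braket_sum_r: "braket v (\<Sum>c\<in>S. f c) = (\<Sum>c\<in>S. braket v (f c))"
  by (simp add: braket_def sum_component sum_distrib_left sum.swap[of _ UNIV])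

lemma ww_orth: assumes "c < 4" "c' < 4" "c \<noteq> c'"
  shows "braket (ww psi0 c) (ww psi0 c') = 0"
  using lt4[OF assms(1)] lt4[OF assms(2)] assms(3)
  by (elim disjE) (simp_all add: braket_def ww_def sum_22 PP_def bv_def n2 algebra_simps)

lemma braket_self_real: "Im (braket v v) = 0"
  by (simp add: braket_def Im_sum)

lemma braket_dec: "braket (\<Sum>c<4. LL (ww psi0 c) (x c)) (\<Sum>c<4. LL (ww psi0 c) (y c))
   = (\<Sum>c<4. cnj (x c) * y c * braket (ww psi0 c) (ww psi0 c))"
proof -
  have "braket (\<Sum>c<4. LL (ww psi0 c) (x c)) (\<Sum>c<4. LL (ww psi0 c) (y c))
     = (\<Sum>c'<4. \<Sum>c<4. cnj (x c) * y c' * braket (ww psi0 c) (ww psi0 c'))"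
    by (simp add: braket_sum_l braket_sum_r braket_LL)
  also have "\<dots> = (\<Sum>c'<4. \<Sum>c<4. if c = c' then cnj (x c) * y c * braket (ww psi0 c) (ww psi0 c) else 0)"
    by (intro sum.cong refl) (auto simp: ww_orth)
  also have "\<dots> = (\<Sum>c<4. cnj (x c) * y c * braket (ww psi0 c) (ww psi0 c))"
    by simp
  finally show ?thesis .
qed

lemma D_gen:
  fixes e n :: "nat \<Rightarrow> complex" and s s' r :: "nat \<Rightarrow> real"
  assumes "\<And>c. cnj (e c) * e c * n c = of_real (r c)"
  shows "Im ((\<Sum>c<4. cnj (- \<i> * of_real (s c) * e c) * (- \<i> * of_real (s' c) * e c) * n c)
     - (\<Sum>c<4. cnj (- \<i> * of_real (s c) * e c) * e c * n c) * (\<Sum>c<4. cnj (e c) * (- \<i> * of_real (s' c) * e c) * n c)) = 0"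
proof -
  have h1: "cnj (- \<i> * of_real (s c) * e c) * (- \<i> * of_real (s' c) * e c) * n c = of_real (s c * s' c * r c)" for c
  proof -
    have "cnj (- \<i> * of_real (s c) * e c) * (- \<i> * of_real (s' c) * e c) * n c = of_real (s c * s' c) * (cnj (e c) * e c * n c)"
      by (simp add: algebra_simps)
    then show ?thesis by (simp add: assms)
  qed
  have h2: "cnj (- \<i> * of_real (s c) * e c) * e c * n c = \<i> * of_real (s c * r c)" for c
  proof -
    have "cnj (- \<i> * of_real (s c) * e c) * e c * n c = \<i> * of_real (s c) * (cnj (e c) * e c * n c)"
      by (simp add: algebra_simps)
    then show ?thesis by (simp add: assms)
  qed
  have h3: "cnj (e c) * (- \<i> * of_real (s' c) * e c) * n c = - \<i> * of_real (s' c * r c)" for c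
  proof -
    have "cnj (e c) * (- \<i> * of_real (s' c) * e c) * n c = - \<i> * of_real (s' c) * (cnj (e c) * e c * n c)"
      by (simp add: algebra_simps)
    then show ?thesis by (simp add: assms)
  qed
  show ?thesis
    unfolding h1 h2 h3 by (simp add: sum_distrib_left[symmetric] Im_sum)
qed

theorem mainTheorem1:
  fixes psi0 :: two_qubit_vec
  assumes "braket psi0 psi0 = 1"
  shows "\<forall>lam j k. uhlmann_D (\<lambda>l. U_lam l *v psi0) lam j k = 0"
proof (intro allI)
  fix lam j k
  have e: "cnj (exp (mu c lam)) * exp (mu c lam) * braket (ww psi0 c) (ww psi0 c)
      = of_real (Re (cnj (exp (mu c lam)) * exp (mu c lam) * braket (ww psi0 c) (ww psi0 c)))" for c
    by (simp add: complex_eq_iff braket_self_real)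
  have psi: "(\<lambda>l. U_lam l *v psi0) lam = (\<Sum>c<4. LL (ww psi0 c) (exp (mu c lam)))"
    by (simp add: psi_dec)
  show "uhlmann_D (\<lambda>l. U_lam l *v psi0) lam j k = 0"
    unfolding uhlmann_D_def pdiff_dec psi braket_dec
    using D_gen[of "\<lambda>c. exp (mu c lam)" "\<lambda>c. braket (ww psi0 c) (ww psi0 c)", OF e]
    by (simp add: mult.assoc)
qed

end
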